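(* Let $S$ be a $\mathcal{C}$-semigroup with $S\neq \mathcal{C}$ and genus $g$. Then $S$ is symmetric if and only if $g=\# I_S(F(S))$.
   Context: An integer cone $\mathcal{C}\subseteq\mathbb{N}^p$ is the set of integer points of a finitely generated rational cone in $\mathbb{Q}_{\ge0}^p$. A $\mathcal{C}$-semigroup is a subset $S\subseteq\mathcal{C}$ containing $0$, closed under addition, with $\mathcal{C}\setminus S$ finite; $\mathcal{H}(S)=\mathcal{C}\setminus S$ and $g=\#\mathcal{H}(S)$. A monomial order $\preceq$ on $\mathbb{N}^p$ is fixed (total order, compatible with addition, $\mathbf 0\preceq\mathbf c$ for all $\mathbf c$), and $F(S)=\max_\preceq\mathcal{H}(S)$. $\mathrm{PF}(S)=\{\mathbf x\in\mathcal{H}(S)\mid \mathbf x+(S\setminus\{0\})\subseteq S\}$. $S$ is symmetric if $\mathrm{PF}(S)=\{F(S)\}$. For $L\subseteq\mathbb{N}^p$, $\mathbf x\le_L\mathbf y$ means $\mathbf y-\mathbf x\in L$. For $\mathbf n\in\mathcal{C}$, $I_S(\mathbf n)=\{\mathbf s\in S\mid \mathbf s\le_{\mathcal{C}}\mathbf n\}$. *)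

theory Defs
  imports Complex_Main "HOL-Library.Function_Algebras"
begin

text \<open>Points of N^p are modelled as functions 'n \<Rightarrow> nat, for a finite index type 'n
  (so p = CARD('n)). Addition and zero are pointwise (Function_Algebras).\<close>

definition integer_cone :: "('n::finite \<Rightarrow> nat) set \<Rightarrow> bool" where
  "integer_cone C \<longleftrightarrow>
     (\<exists>G :: ('n \<Rightarrow> rat) set. finite G \<and> (\<forall>g\<in>G. \<forall>i. g i \<ge> 0) \<and>
        C = {x. \<exists>c :: ('n \<Rightarrow> rat) \<Rightarrow> rat. (\<forall>g\<in>G. c g \<ge> 0) \<and>
                   (\<forall>i. of_nat (x i) = (\<Sum>g\<in>G. c g * g i))})"

definition monomial_order :: "(('n \<Rightarrow> nat) \<Rightarrow> ('n \<Rightarrow> nat) \<Rightarrow> bool) \<Rightarrow> bool" where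
  "monomial_order le \<longleftrightarrow>
     (\<forall>x. le x x) \<and>
     (\<forall>x y. le x y \<and> le y x \<longrightarrow> x = y) \<and>
     (\<forall>x y z. le x y \<and> le y z \<longrightarrow> le x z) \<and>
     (\<forall>x y. le x y \<or> le y x) \<and>
     (\<forall>x y z. le x y \<longrightarrow> le (x + z) (y + z)) \<and>
     (\<forall>c. le 0 c)"

definition C_semigroup :: "('n \<Rightarrow> nat) set \<Rightarrow> ('n \<Rightarrow> nat) set \<Rightarrow> bool" where
  "C_semigroup C S \<longleftrightarrow> S \<subseteq> C \<and> 0 \<in> S \<and> (\<forall>x\<in>S. \<forall>y\<in>S. x + y \<in> S) \<and> finite (C - S)"

definition gaps :: "('n \<Rightarrow> nat) set \<Rightarrow> ('n \<Rightarrow> nat) set \<Rightarrow> ('n \<Rightarrow> nat) set" where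
  "gaps C S = C - S"

definition genus :: "('n \<Rightarrow> nat) set \<Rightarrow> ('n \<Rightarrow> nat) set \<Rightarrow> nat" where
  "genus C S = card (gaps C S)"

definition Frob :: "(('n \<Rightarrow> nat) \<Rightarrow> ('n \<Rightarrow> nat) \<Rightarrow> bool) \<Rightarrow> ('n \<Rightarrow> nat) set \<Rightarrow> ('n \<Rightarrow> nat) set \<Rightarrow> 'n \<Rightarrow> nat" where
  "Frob le C S = (THE f. f \<in> gaps C S \<and> (\<forall>y\<in>gaps C S. le y f))"

definition PF :: "('n \<Rightarrow> nat) set \<Rightarrow> ('n \<Rightarrow> nat) set \<Rightarrow> ('n \<Rightarrow> nat) set" where
  "PF C S = {x \<in> gaps C S. \<forall>s \<in> S - {0}. x + s \<in> S}"

definition symmetric_sg :: "(('n \<Rightarrow> nat) \<Rightarrow> ('n \<Rightarrow> nat) \<Rightarrow> bool) \<Rightarrow> ('n \<Rightarrow> nat) set \<Rightarrow> ('n \<Rightarrow> nat) set \<Rightarrow> bool" where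
  "symmetric_sg le C S \<longleftrightarrow> PF C S = {Frob le C S}"

text \<open>x \<le>_L y iff y - x \<in> L (difference taken in Z^p; since L \<subseteq> N^p this means y = x + l with l \<in> L).\<close>
definition le_L :: "('n \<Rightarrow> nat) set \<Rightarrow> ('n \<Rightarrow> nat) \<Rightarrow> ('n \<Rightarrow> nat) \<Rightarrow> bool" where
  "le_L L x y \<longleftrightarrow> (\<exists>l\<in>L. y = x + l)"

definition I_S :: "('n \<Rightarrow> nat) set \<Rightarrow> ('n \<Rightarrow> nat) set \<Rightarrow> ('n \<Rightarrow> nat) \<Rightarrow> ('n \<Rightarrow> nat) set" where
  "I_S C S n = {s \<in> S. le_L C s n}"

end

theory Submission
  imports Defs
begin

lemma cone_add:
  assumes "integer_cone C" "x \<in> C" "y \<in> C"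
  shows "x + y \<in> C"
proof -
  obtain G :: "('a \<Rightarrow> rat) set" where G: "finite G" and
    C: "C = {x. \<exists>c :: ('a \<Rightarrow> rat) \<Rightarrow> rat. (\<forall>g\<in>G. c g \<ge> 0) \<and>
                   (\<forall>i. of_nat (x i) = (\<Sum>g\<in>G. c g * g i))}"
    using assms(1) unfolding integer_cone_def by blast
  obtain c1 where c1: "\<forall>g\<in>G. c1 g \<ge> 0" "\<forall>i. of_nat (x i) = (\<Sum>g\<in>G. c1 g * g i)"
    using assms(2) C by blast
  obtain c2 where c2: "\<forall>g\<in>G. c2 g \<ge> 0" "\<forall>i. of_nat (y i) = (\<Sum>g\<in>G. c2 g * g i)"
    using assms(3) C by blast
  have "\<forall>g\<in>G. c1 g + c2 g \<ge> 0" using c1 c2 by auto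
  moreover have "\<forall>i. of_nat ((x+y) i) = (\<Sum>g\<in>G. (c1 g + c2 g) * g i)"
    using c1 c2 by (simp add: distrib_right sum.distrib)
  ultimately show ?thesis unfolding C mem_Collect_eq
    by (intro exI[of _ "\<lambda>g. c1 g + c2 g"]) blast
qed

lemma mo_refl: "monomial_order le \<Longrightarrow> le x x" unfolding monomial_order_def by blast
lemma mo_antisym: "monomial_order le \<Longrightarrow> le x y \<Longrightarrow> le y x \<Longrightarrow> x = y" unfolding monomial_order_def by blast
lemma mo_trans: "monomial_order le \<Longrightarrow> le x y \<Longrightarrow> le y z \<Longrightarrow> le x z" unfolding monomial_order_def by blast
lemma mo_total: "monomial_order le \<Longrightarrow> le x y \<or> le y x" unfolding monomial_order_def by blast

lemma mo_le_add:
  assumes "monomial_order le"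
  shows "le x (x + s)"
proof -
  have "le 0 s" using assms unfolding monomial_order_def by blast
  hence "le (0 + x) (s + x)" using assms unfolding monomial_order_def by blast
  thus ?thesis by (simp add: add.commute)
qed

lemma fun_add_eq_self:
  fixes x s :: "'a \<Rightarrow> nat"
  assumes "x + s = x" shows "s = 0"
proof
  fix i have "x i + s i = x i" using assms by (metis plus_fun_def)
  thus "s i = 0 i" by simp
qed

lemma mo_max_exists:
  assumes "monomial_order le" "finite A" "A \<noteq> {}"
  shows "\<exists>m\<in>A. \<forall>y\<in>A. le y m"
  using assms(2,3)
proof (induction A rule: finite_ne_induct)
  case (singleton x) then show ?case using mo_refl[OF assms(1)] by blast
next
  case (insert x F)
  then obtain m where m: "m \<in> F" "\<forall>y\<in>F. le y m" by blast
  show ?case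
  proof (cases "le x m")
    case True then show ?thesis using m by blast
  next
    case False
    hence "le m x" using mo_total[OF assms(1)] by blast
    hence "\<forall>y\<in>insert x F. le y x" using m mo_trans[OF assms(1)] mo_refl[OF assms(1)] by blast
    then show ?thesis by blast
  qed
qed

lemma Frob_props:
  assumes "monomial_order le" "C_semigroup C S" "S \<noteq> C"
  shows "Frob le C S \<in> gaps C S \<and> (\<forall>y\<in>gaps C S. le y (Frob le C S))"
proof -
  have fin: "finite (gaps C S)" "gaps C S \<noteq> {}" using assms(2,3)
    unfolding C_semigroup_def gaps_def by auto
  obtain m where m: "m \<in> gaps C S" "\<forall>y\<in>gaps C S. le y m"
    using mo_max_exists[OF assms(1) fin] by blast
  have "\<exists>!f. f \<in> gaps C S \<and> (\<forall>y\<in>gaps C S. le y f)"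
  proof (rule ex1I[of _ m])
    show "m \<in> gaps C S \<and> (\<forall>y\<in>gaps C S. le y m)" using m by blast
  next
    fix f assume "f \<in> gaps C S \<and> (\<forall>y\<in>gaps C S. le y f)"
    thus "f = m" using m mo_antisym[OF assms(1)] by blast
  qed
  from theI'[OF this] show ?thesis unfolding Frob_def .
qed

theorem mainTheorem2:
  fixes C S :: "('n::finite \<Rightarrow> nat) set"
    and le :: "('n \<Rightarrow> nat) \<Rightarrow> ('n \<Rightarrow> nat) \<Rightarrow> bool"
  assumes "integer_cone C"
    and "monomial_order le"
    and "C_semigroup C S"
    and "S \<noteq> C"
  shows "symmetric_sg le C S \<longleftrightarrow> genus C S = card (I_S C S (Frob le C S))"
proof -
  define F where "F = Frob le C S"
  have FP: "F \<in> gaps C S" "\<forall>y\<in>gaps C S. le y F"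
    using Frob_props[OF assms(2,3,4)] unfolding F_def by auto
  have SC: "S \<subseteq> C" "0 \<in> S" "\<forall>x\<in>S. \<forall>y\<in>S. x + y \<in> S" "finite (C - S)"
    using assms(3) unfolding C_semigroup_def by auto
  have fing: "finite (gaps C S)" using SC unfolding gaps_def by simp
  have moa: "\<forall>x y. le x y \<and> le y x \<longrightarrow> x = y" using mo_antisym[OF assms(2)] by blast
  have FPF: "F \<in> PF C S"
    unfolding PF_def
  proof (intro CollectI conjI ballI FP(1))
    fix s assume s: "s \<in> S - {0}"
    have "F + s \<in> C" using cone_add[OF assms(1)] FP(1) s SC(1) unfolding gaps_def by blast
    show "F + s \<in> S"
    proof (rule ccontr)
      assume "F + s \<notin> S"
      hence "F + s \<in> gaps C S" using \<open>F + s \<in> C\<close> unfolding gaps_def by blast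
      hence "le (F + s) F" using FP by blast
      moreover have "le F (F + s)" by (rule mo_le_add[OF assms(2)])
      ultimately have "F + s = F" using moa by blast
      hence "s = 0" by (rule fun_add_eq_self)
      thus False using s by blast
    qed
  qed
  define g where "g = (\<lambda>s::'n\<Rightarrow>nat. (\<lambda>i. F i - s i))"
  have gprop: "F = s + l \<Longrightarrow> g s = l" for s l
    unfolding g_def by (auto simp: plus_fun_def)
  have gprop2: "F = s + l \<Longrightarrow> s + g s = F" for s l
    using gprop by blast
  have ginj: "inj_on g (I_S C S F)"
  proof (rule inj_onI)
    fix a b assume a: "a \<in> I_S C S F" and b: "b \<in> I_S C S F" and e: "g a = g b"
    obtain la where la: "F = a + la" using a unfolding I_S_def le_L_def by blast
    obtain lb where lb: "F = b + lb" using b unfolding I_S_def le_L_def by blast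
    have "a + la = b + la" using la lb gprop e by metis
    thus "a = b" by (auto simp: fun_eq_iff plus_fun_def)
  qed
  have gimg: "g ` I_S C S F \<subseteq> gaps C S"
  proof
    fix h assume "h \<in> g ` I_S C S F"
    then obtain s where s: "s \<in> I_S C S F" "h = g s" by blast
    obtain l where l: "l \<in> C" "F = s + l" using s unfolding I_S_def le_L_def by blast
    have "h = l" using gprop l s by blast
    have "l \<notin> S"
    proof
      assume "l \<in> S" hence "F \<in> S" using l s SC unfolding I_S_def by blast
      thus False using FP unfolding gaps_def by blast
    qed
    thus "h \<in> gaps C S" using l \<open>h = l\<close> unfolding gaps_def by blast
  qed
  have finI: "finite (I_S C S F)"
    using finite_imageD[OF finite_subset[OF gimg fing] ginj] .
  have cardI: "card (I_S C S F) = card (g ` I_S C S F)" using card_image[OF ginj] by simp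
  have key: "genus C S = card (I_S C S F) \<longleftrightarrow> (\<forall>h\<in>gaps C S. \<exists>s\<in>S. F = h + s)"
  proof
    assume eq: "genus C S = card (I_S C S F)"
    have "g ` I_S C S F = gaps C S"
      using card_subset_eq[OF fing gimg] eq cardI unfolding genus_def by simp
    show "\<forall>h\<in>gaps C S. \<exists>s\<in>S. F = h + s"
    proof
      fix h assume "h \<in> gaps C S"
      then obtain s where s: "s \<in> I_S C S F" "h = g s" using \<open>g ` I_S C S F = gaps C S\<close> by blast
      obtain l where l: "F = s + l" using s unfolding I_S_def le_L_def by blast
      have "h = l" using gprop l s by blast
      thus "\<exists>s\<in>S. F = h + s" using s l unfolding I_S_def by (auto simp: add.commute)
    qed
  next
    assume H: "\<forall>h\<in>gaps C S. \<exists>s\<in>S. F = h + s"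
    have "gaps C S \<subseteq> g ` I_S C S F"
    proof
      fix h assume h: "h \<in> gaps C S"
      then obtain s where s: "s \<in> S" "F = h + s" using H by blast
      have "F = s + h" using s by (simp add: add.commute)
      hence "s \<in> I_S C S F" using s h unfolding I_S_def le_L_def gaps_def by blast
      moreover have "g s = h" using gprop \<open>F = s + h\<close> by blast
      ultimately show "h \<in> g ` I_S C S F" by blast
    qed
    hence "g ` I_S C S F = gaps C S" using gimg by blast
    thus "genus C S = card (I_S C S F)" using cardI unfolding genus_def by simp
  qed
  have "symmetric_sg le C S \<longleftrightarrow> (\<forall>h\<in>gaps C S. \<exists>s\<in>S. F = h + s)"
  proof
    assume sym: "symmetric_sg le C S"
    hence PFeq: "PF C S = {F}" unfolding symmetric_sg_def F_def .
    show "\<forall>h\<in>gaps C S. \<exists>s\<in>S. F = h + s"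
    proof
      fix h assume h: "h \<in> gaps C S"
      define A where "A = {x \<in> gaps C S. \<exists>s\<in>S. x = h + s}"
      have "h \<in> A" unfolding A_def using h SC(2) by auto
      hence "A \<noteq> {}" "finite A" using fing unfolding A_def by auto
      then obtain x where x: "x \<in> A" "\<forall>y\<in>A. le y x"
        using mo_max_exists[OF assms(2)] by blast
      obtain s where s: "s \<in> S" "x = h + s" using x unfolding A_def by blast
      have "x \<in> PF C S"
        unfolding PF_def
      proof (intro CollectI conjI ballI)
        show "x \<in> gaps C S" using x unfolding A_def by blast
        fix t assume t: "t \<in> S - {0}"
        have "x + t \<in> C" using cone_add[OF assms(1)] x t SC(1) unfolding A_def gaps_def by blast
        show "x + t \<in> S"
        proof (rule ccontr)
          assume "x + t \<notin> S"
          moreover have "x + t = h + (s + t)" using s by (simp add: add.assoc)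
          moreover have "s + t \<in> S" using s t SC by blast
          ultimately have "x + t \<in> A" using \<open>x + t \<in> C\<close> unfolding A_def gaps_def by blast
          hence "le (x + t) x" using x by blast
          moreover have "le x (x + t)" by (rule mo_le_add[OF assms(2)])
          ultimately have "x + t = x" using moa by blast
          hence "t = 0" by (rule fun_add_eq_self)
          thus False using t by blast
        qed
      qed
      hence "x = F" using PFeq by blast
      thus "\<exists>s\<in>S. F = h + s" using s by blast
    qed
  next
    assume H: "\<forall>h\<in>gaps C S. \<exists>s\<in>S. F = h + s"
    have "PF C S = {F}"
    proof
      show "{F} \<subseteq> PF C S" using FPF by blast
      show "PF C S \<subseteq> {F}"
      proof
        fix x assume x: "x \<in> PF C S"
        then obtain s where s: "s \<in> S" "F = x + s" using H unfolding PF_def by blast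
        show "x \<in> {F}"
        proof (cases "s = 0")
          case True then show ?thesis using s by simp
        next
          case False
          hence "x + s \<in> S" using x s unfolding PF_def by blast
          thus ?thesis using s FP unfolding gaps_def by blast
        qed
      qed
    qed
    thus "symmetric_sg le C S" unfolding symmetric_sg_def F_def .
  qed
  with key show ?thesis unfolding F_def by simp
qed

end
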